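(* Suppose that (i) $K:\mathbb R^p\rightrightarrows\mathbb R^n$ is lower semicontinuous, and (ii) $f:\mathbb R^p\times\mathbb R^n\times\mathbb R^n\to\mathbb R^m$ is $C$-u.s.c. (at every point). Then the function $\nu:\mathbb R^p\times\mathbb R^n\to[0,+\infty]$, $\nu(\xi,x)=\sup_{z\in K(\xi)}\operatorname{dist}(f(\xi,x,z),C)$, is lower semicontinuous on $\mathbb R^p\times\mathbb R^n$.
   Context: $C\subset\mathbb R^m$ is a nontrivial closed, convex, pointed cone. $K:\mathbb R^p\rightrightarrows\mathbb R^n$ is a set-valued mapping with closed graph and $K(\xi)\neq\emptyset$ for every $\xi\in\mathbb R^p$ (standing assumption). A mapping $g:X\to Y$ between Euclidean spaces is $C$-u.s.c. at $x_0$ if for every neighbourhood $V$ of $g(x_0)$ there is a neighbourhood $U$ of $x_0$ with $g(x)\in V-C$ for all $x\in U$; it is $C$-u.s.c. if this holds at every point. $\operatorname{dist}(y,C)=\inf_{c\in C}\|y-c\|$ (Euclidean norm). *)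

theory Defs
  imports "HOL-Analysis.Analysis" "HOL-Library.Extended_Real"
begin

definition setval_lsc_at :: "('a::topological_space \<Rightarrow> 'b::topological_space set) \<Rightarrow> 'a \<Rightarrow> bool" where
  "setval_lsc_at K x0 \<longleftrightarrow>
     (\<forall>V. open V \<and> V \<inter> K x0 \<noteq> {} \<longrightarrow>
        (\<exists>U. open U \<and> x0 \<in> U \<and> (\<forall>x\<in>U. K x \<inter> V \<noteq> {})))"

definition setval_lsc :: "('a::topological_space \<Rightarrow> 'b::topological_space set) \<Rightarrow> bool" where
  "setval_lsc K \<longleftrightarrow> (\<forall>x0. setval_lsc_at K x0)"

definition C_usc_at :: "'b::real_normed_vector set \<Rightarrow> ('a::topological_space \<Rightarrow> 'b) \<Rightarrow> 'a \<Rightarrow> bool" where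
  "C_usc_at C g x0 \<longleftrightarrow>
     (\<forall>V. open V \<and> g x0 \<in> V \<longrightarrow>
        (\<exists>U. open U \<and> x0 \<in> U \<and> (\<forall>x\<in>U. g x \<in> {v - c | v c. v \<in> V \<and> c \<in> C})))"

definition C_usc :: "'b::real_normed_vector set \<Rightarrow> ('a::topological_space \<Rightarrow> 'b) \<Rightarrow> bool" where
  "C_usc C g \<longleftrightarrow> (\<forall>x0. C_usc_at C g x0)"

definition ereal_lsc_at :: "('a::topological_space \<Rightarrow> ereal) \<Rightarrow> 'a \<Rightarrow> bool" where
  "ereal_lsc_at g x0 \<longleftrightarrow> g x0 \<le> Liminf (at x0) g"

definition ereal_lsc :: "('a::topological_space \<Rightarrow> ereal) \<Rightarrow> bool" where
  "ereal_lsc g \<longleftrightarrow> (\<forall>x0. ereal_lsc_at g x0)"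

end

theory Submission
  imports Defs
begin

lemma cone_convex_add:
  fixes C :: "'m::euclidean_space set"
  assumes "convex C" "cone C" "a \<in> C" "b \<in> C"
  shows "a + b \<in> C"
proof -
  have "(1/2::real) *\<^sub>R a + (1/2::real) *\<^sub>R b \<in> C"
    using assms(1,3,4) unfolding convex_def by auto
  then have "(2::real) *\<^sub>R ((1/2::real) *\<^sub>R a + (1/2::real) *\<^sub>R b) \<in> C"
    using assms(2) unfolding cone_def by auto
  then show ?thesis by (simp add: scaleR_add_right)
qed

lemma infdist_minus_cone:
  fixes C :: "'m::euclidean_space set"
  assumes "convex C" "cone C" "c \<in> C"
  shows "infdist v C \<le> infdist (v - c) C"
proof -
  have ne: "C \<noteq> {}" using assms by auto
  have "infdist v C \<le> dist (v - c) c'" if "c' \<in> C" for c'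
  proof -
    have "c + c' \<in> C" using cone_convex_add[OF assms(1,2,3) that] .
    then have "infdist v C \<le> dist v (c + c')" by (rule infdist_le)
    also have "\<dots> = dist (v - c) c'" by (simp add: dist_norm algebra_simps)
    finally show ?thesis .
  qed
  then show ?thesis unfolding infdist_def[of "v - c"] using ne
    by (auto intro!: cINF_greatest)
qed

lemma g_lsc:
  fixes C :: "'m::euclidean_space set" and f :: "'a::topological_space \<Rightarrow> 'm"
  assumes "convex C" "cone C" "C_usc C f" "r < infdist (f w0) C"
  shows "\<exists>W. open W \<and> w0 \<in> W \<and> (\<forall>w\<in>W. r < infdist (f w) C)"
proof -
  define e where "e = infdist (f w0) C - r"
  have e: "e > 0" using assms(4) by (simp add: e_def)
  obtain U where U: "open U" "w0 \<in> U"
    "\<forall>x\<in>U. f x \<in> {v - c | v c. v \<in> ball (f w0) e \<and> c \<in> C}"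
  proof -
    have "C_usc_at C f w0" using assms(3) unfolding C_usc_def by blast
    moreover have "open (ball (f w0) e) \<and> f w0 \<in> ball (f w0) e" using e by simp
    ultimately show ?thesis using that unfolding C_usc_at_def by blast
  qed
  have "r < infdist (f w) C" if wU: "w \<in> U" for w
  proof -
    obtain v c where vc: "f w = v - c" "v \<in> ball (f w0) e" "c \<in> C" using U(3) wU by blast
    have "infdist (f w0) C \<le> infdist v C + dist (f w0) v" by (rule infdist_triangle)
    moreover have "dist (f w0) v < e" using vc(2) by simp
    moreover have "infdist v C \<le> infdist (f w) C"
      using infdist_minus_cone[OF assms(1,2) vc(3)] vc(1) by simp
    ultimately show ?thesis by (simp add: e_def)
  qed
  then show ?thesis using U by blast
qed

theorem mainTheorem1:
  fixes C :: "'m::euclidean_space set"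
    and K :: "'p::euclidean_space \<Rightarrow> 'n::euclidean_space set"
    and f :: "'p \<times> 'n \<times> 'n \<Rightarrow> 'm"
  assumes C_closed: "closed C" and C_convex: "convex C" and C_cone: "cone C"
    and C_pointed: "C \<inter> uminus ` C = {0}"
    and C_nontrivial: "C \<noteq> {0}"
    and K_graph_closed: "closed {(\<xi>, x). x \<in> K \<xi>}"
    and K_nonempty: "\<And>\<xi>. K \<xi> \<noteq> {}"
    and K_lsc: "setval_lsc K"
    and f_usc: "C_usc C f"
  shows "ereal_lsc (\<lambda>(\<xi>, x). SUP z\<in>K \<xi>. ereal (infdist (f (\<xi>, x, z)) C))"
  unfolding ereal_lsc_def ereal_lsc_at_def
proof
  fix p0 :: "'p \<times> 'n"
  obtain \<xi>0 x0 where p0: "p0 = (\<xi>0, x0)" by (cases p0)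
  define \<nu> where "\<nu> = (\<lambda>(\<xi>, x). SUP z\<in>K \<xi>. ereal (infdist (f (\<xi>, x, z)) C))"
  have ev: "\<forall>\<^sub>F p in nhds p0. y < \<nu> p" if y: "y < \<nu> p0" for y
  proof -
    from y obtain z0 where z0: "z0 \<in> K \<xi>0" "y < ereal (infdist (f (\<xi>0, x0, z0)) C)"
      unfolding \<nu>_def p0 by (auto simp: less_SUP_iff)
    obtain r where r: "y < ereal r" "ereal r < ereal (infdist (f (\<xi>0, x0, z0)) C)"
      using ereal_dense2[OF z0(2)] by blast
    obtain W where W: "open W" "(\<xi>0, x0, z0) \<in> W" "\<forall>w\<in>W. r < infdist (f w) C"
      using g_lsc[OF C_convex C_cone f_usc, of r "(\<xi>0, x0, z0)"] r(2) by auto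
    obtain A1 B1 where AB1: "open A1" "open B1" "(\<xi>0, x0, z0) \<in> A1 \<times> B1" "A1 \<times> B1 \<subseteq> W"
      using open_prod_elim[OF W(1,2)] by blast
    obtain A2 B2 where AB2: "open A2" "open B2" "(x0, z0) \<in> A2 \<times> B2" "A2 \<times> B2 \<subseteq> B1"
      using open_prod_elim[OF AB1(2), of "(x0, z0)"] AB1(3) by auto
    obtain U where U: "open U" "\<xi>0 \<in> U" "\<forall>\<xi>\<in>U. K \<xi> \<inter> B2 \<noteq> {}"
      using K_lsc AB2(2,3) z0(1) unfolding setval_lsc_def setval_lsc_at_def by blast
    have "y < \<nu> p" if p: "p \<in> (U \<inter> A1) \<times> A2" for p
    proof -
      obtain \<xi> x where px: "p = (\<xi>, x)" by (cases p)
      obtain z where z: "z \<in> K \<xi>" "z \<in> B2" using U(3) p px by auto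
      have "(\<xi>, x, z) \<in> W" using AB1(4) AB2(4) p px z(2) by auto
      then have "r < infdist (f (\<xi>, x, z)) C" using W(3) by blast
      then have "y < ereal (infdist (f (\<xi>, x, z)) C)" using r(1) by (simp add: less_trans)
      then show ?thesis unfolding \<nu>_def px using z(1) by (auto simp: less_SUP_iff)
    qed
    moreover have "open ((U \<inter> A1) \<times> A2)" using U(1) AB1(1) AB2(1) by (intro open_Times open_Int)
    moreover have "p0 \<in> (U \<inter> A1) \<times> A2" using p0 U(2) AB1(3) AB2(3) by auto
    ultimately show ?thesis unfolding eventually_nhds by blast
  qed
  have "\<nu> p0 \<le> Liminf (at p0) \<nu>"
    unfolding le_Liminf_iff
  proof (intro allI impI)
    fix y assume "y < \<nu> p0"
    then have "\<forall>\<^sub>F p in nhds p0. y < \<nu> p" using ev by blast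
    then have "\<forall>\<^sub>F p in nhds p0. p \<noteq> p0 \<longrightarrow> p \<in> UNIV \<longrightarrow> y < \<nu> p"
      by (rule eventually_mono) simp
    then show "\<forall>\<^sub>F p in at p0. y < \<nu> p" unfolding eventually_at_filter .
  qed
  then show "(\<lambda>(\<xi>, x). SUP z\<in>K \<xi>. ereal (infdist (f (\<xi>, x, z)) C)) p0
      \<le> Liminf (at p0) (\<lambda>(\<xi>, x). SUP z\<in>K \<xi>. ereal (infdist (f (\<xi>, x, z)) C))"
    by (simp only: \<nu>_def)
qed

end
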